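(* Let $E_1,\dots,E_N$ be a symmetric sequence of events with correlation functions $G_k$ and correlation coefficients $C_k$. Then for every $k$ with $2\le k\le N$ and all $r_1,\dots,r_k\in\{0,1\}$, $$G_k(r_1,\dots,r_k)=N^{-k}C_k\prod_{l=1}^{k}(-1)^{r_l+1}.$$
   Context: $\mathbbm{1}_E$ is the indicator function of an event $E$. A finite sequence of events $E_1,\dots,E_N$ on a common probability space is called symmetric if for all $r_1,\dots,r_N\in\{0,1\}$ and all permutations $\sigma$ of $\{1,\dots,N\}$, $P(\mathbbm{1}_{E_1}=r_1,\dots,\mathbbm{1}_{E_N}=r_N)=P(\mathbbm{1}_{E_1}=r_{\sigma(1)},\dots,\mathbbm{1}_{E_N}=r_{\sigma(N)})$. For $1\le k\le N$ the probability function of order $k$ is $P_k(r_1,\dots,r_k):=\sum_{r_{k+1},\dots,r_N\in\{0,1\}}P(\mathbbm{1}_{E_1}=r_1,\dots,\mathbbm{1}_{E_N}=r_N)$. The correlation functions $G_k:\{0,1\}^k\to\mathbb{R}$ are defined by $G_1:=P_1$ and, recursively for $1<k\le N$, $$G_k(r_1,\dots,r_k):=P_k(r_1,\dots,r_k)-\sum_{\sigma}\sum_{l=1}^{k-1}\frac{1}{(l-1)!\,(k-l)!}G_l(r_1,r_{\sigma(2)},\dots,r_{\sigma(l)})\,P_{k-l}(r_{\sigma(l+1)},\dots,r_{\sigma(k)}),$$ where $\sigma$ runs over all permutations of $\{2,\dots,k\}$. The correlation coefficient of order $k$ is $C_k:=N^kG_k(1,\dots,1)$. *)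

theory Defs
  imports "HOL-Probability.Probability" "HOL-Combinatorics.Permutations"
begin

text \<open>Events are indexed by 1..N; an outcome pattern is a function r :: nat => nat
  whose values r i (i in 1..N) lie in {0,1}.\<close>

definition joint_prob :: "'a measure \<Rightarrow> (nat \<Rightarrow> 'a set) \<Rightarrow> nat \<Rightarrow> (nat \<Rightarrow> nat) \<Rightarrow> real" where
  "joint_prob M E N r =
     measure M {\<omega> \<in> space M. \<forall>i\<in>{1..N}. (of_bool (\<omega> \<in> E i) :: nat) = r i}"

definition symmetric_events :: "'a measure \<Rightarrow> (nat \<Rightarrow> 'a set) \<Rightarrow> nat \<Rightarrow> bool" where
  "symmetric_events M E N \<longleftrightarrow>
     (\<forall>r \<sigma>. (\<forall>i\<in>{1..N}. r i \<in> {0,1}) \<longrightarrow> \<sigma> permutes {1..N} \<longrightarrow>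
        joint_prob M E N r = joint_prob M E N (r \<circ> \<sigma>))"

definition prob_fun :: "'a measure \<Rightarrow> (nat \<Rightarrow> 'a set) \<Rightarrow> nat \<Rightarrow> nat \<Rightarrow> (nat \<Rightarrow> nat) \<Rightarrow> real" where
  "prob_fun M E N k r =
     (\<Sum>t\<in>{k+1..N} \<rightarrow>\<^sub>E {0,1}. joint_prob M E N (\<lambda>i. if i \<le> k then r i else t i))"

function corr_fun :: "'a measure \<Rightarrow> (nat \<Rightarrow> 'a set) \<Rightarrow> nat \<Rightarrow> nat \<Rightarrow> (nat \<Rightarrow> nat) \<Rightarrow> real" where
  "corr_fun M E N k r =
     (if k \<le> 1 then prob_fun M E N 1 r
      else prob_fun M E N k r -
        (\<Sum>\<sigma>\<in>{\<sigma>. \<sigma> permutes {2..k}}. \<Sum>l\<in>{1..k-1}.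
           1 / (fact (l - 1) * fact (k - l)) *
           corr_fun M E N l (\<lambda>i. if i = 1 then r 1 else r (\<sigma> i)) *
           prob_fun M E N (k - l) (\<lambda>i. r (\<sigma> (i + l)))))"
  by pat_completeness auto
termination
  by (relation "Wellfounded.measure (\<lambda>(M,E,N,k,r). k)") auto

declare corr_fun.simps[simp del]

definition corr_coeff :: "'a measure \<Rightarrow> (nat \<Rightarrow> 'a set) \<Rightarrow> nat \<Rightarrow> nat \<Rightarrow> real" where
  "corr_coeff M E N k = real N ^ k * corr_fun M E N k (\<lambda>_. 1)"

end

theory Submission
  imports Defs
begin

definition evs :: "'a measure \<Rightarrow> (nat \<Rightarrow> 'a set) \<Rightarrow> (nat \<Rightarrow> nat) \<Rightarrow> nat set \<Rightarrow> 'a set" where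
  "evs M E f A = {\<omega> \<in> space M. \<forall>i\<in>A. (of_bool (\<omega> \<in> E i) :: nat) = f i}"

lemma evs_cong: "(\<And>i. i \<in> A \<Longrightarrow> f i = g i) \<Longrightarrow> evs M E f A = evs M E g A"
  unfolding evs_def by auto

lemma evs_empty: "evs M E f {} = space M" unfolding evs_def by auto

lemma evs_insert: "evs M E f (insert a A) = evs M E f A \<inter> {\<omega>\<in>space M. (of_bool (\<omega> \<in> E a) :: nat) = f a}"
  unfolding evs_def by auto

lemma evs_sets:
  assumes "finite A" "\<And>i. i \<in> A \<Longrightarrow> E i \<in> sets M"
  shows "evs M E f A \<in> sets M"
  using assms
proof (induction A rule: finite_induct)
  case empty
  then show ?case by (simp add: evs_empty)
next
  case (insert a A)
  have Ea: "E a \<in> sets M" using insert by auto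
  have "{\<omega>\<in>space M. (of_bool (\<omega> \<in> E a) :: nat) = f a} =
    (if f a = 1 then E a else if f a = 0 then space M - E a else {})"
    using sets.sets_into_space[OF Ea] by auto
  also have "\<dots> \<in> sets M" using Ea by auto
  finally show ?case using insert by (simp add: evs_insert sets.Int)
qed

locale symev = prob_space M for M :: "'a measure" +
  fixes E :: "nat \<Rightarrow> 'a set" and N :: nat
  assumes Es: "\<And>i. i \<in> {1..N} \<Longrightarrow> E i \<in> sets M"
    and sym: "symmetric_events M E N"
begin

abbreviation "q f A \<equiv> measure M (evs M E f A)"

lemma evs_sets': "A \<subseteq> {1..N} \<Longrightarrow> evs M E f A \<in> sets M"
  using Es by (intro evs_sets) (auto intro: finite_subset)

lemma split:
  assumes "A \<subseteq> {1..N}" "j \<in> {1..N}" "j \<notin> A"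
  shows "q f A = q (f(j:=0)) (insert j A) + q (f(j:=1)) (insert j A)"
proof -
  have "evs M E f A = evs M E (f(j:=0)) (insert j A) \<union> evs M E (f(j:=1)) (insert j A)"
    using assms(3) unfolding evs_def by (auto simp: of_bool_def)
  moreover have "evs M E (f(j:=0)) (insert j A) \<inter> evs M E (f(j:=1)) (insert j A) = {}"
    unfolding evs_def by auto
  moreover have "evs M E (f(j:=b)) (insert j A) \<in> sets M" for b
    using assms by (intro evs_sets') auto
  ultimately show ?thesis
    by (simp add: measure_Union)
qed

lemma q_empty: "q f {} = 1"
  by (simp add: evs_empty prob_space)

lemma joint_q: "joint_prob M E N f = q f {1..N}"
  unfolding joint_prob_def evs_def by simp

lemma marg:
  assumes "k \<le> N"
  shows "prob_fun M E N k r = q r {1..k}"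
proof -
  define F where "F = {k+1..N} \<rightarrow>\<^sub>E {0::nat,1}"
  define A where "A t = evs M E (\<lambda>i. if i \<le> k then r i else t i) {1..N}" for t
  have fin: "finite F" unfolding F_def by (intro finite_PiE) auto
  have U: "evs M E r {1..k} = (\<Union>t\<in>F. A t)"
  proof
    show "evs M E r {1..k} \<subseteq> (\<Union>t\<in>F. A t)"
    proof
      fix \<omega> assume w: "\<omega> \<in> evs M E r {1..k}"
      define t where "t = restrict (\<lambda>i. of_bool (\<omega> \<in> E i) :: nat) {k+1..N}"
      have "t \<in> F" unfolding t_def F_def by auto
      moreover have "\<omega> \<in> A t" using w unfolding A_def evs_def t_def by auto
      ultimately show "\<omega> \<in> (\<Union>t\<in>F. A t)" by blast
    qed
  next
    show "(\<Union>t\<in>F. A t) \<subseteq> evs M E r {1..k}"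
      unfolding A_def evs_def using assms by auto
  qed
  have dj: "disjoint_family_on A F"
    unfolding disjoint_family_on_def
  proof (intro ballI impI)
    fix t t' assume t: "t \<in> F" "t' \<in> F" "t \<noteq> t'"
    then obtain i where i: "i \<in> {k+1..N}" "t i \<noteq> t' i"
      unfolding F_def by (metis PiE_ext)
    show "A t \<inter> A t' = {}"
    proof (rule ccontr)
      assume "A t \<inter> A t' \<noteq> {}"
      then obtain w where w: "w \<in> A t" "w \<in> A t'" by blast
      have i1: "i \<in> {1..N}" "\<not> i \<le> k" using i by auto
      have "(of_bool (w \<in> E i)::nat) = t i" using w(1) i1 unfolding A_def evs_def by force
      moreover have "(of_bool (w \<in> E i)::nat) = t' i" using w(2) i1 unfolding A_def evs_def by force
      ultimately show False using i by simp
    qed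
  qed
  have "q r {1..k} = (\<Sum>t\<in>F. measure M (A t))"
    unfolding U
    by (rule measure_finite_Union[OF fin _ dj]) (auto simp: A_def intro!: evs_sets')
  also have "\<dots> = prob_fun M E N k r"
    unfolding prob_fun_def F_def A_def joint_q ..
  finally show ?thesis by simp
qed

lemma symq_aux:
  "card ({1..N} - B) = n \<Longrightarrow> B \<subseteq> {1..N} \<Longrightarrow> A \<subseteq> {1..N} \<Longrightarrow> bij_betw \<tau> A B \<Longrightarrow>
   (\<forall>i\<in>A. f i = s (\<tau> i)) \<Longrightarrow> (\<forall>i\<in>B. s i \<le> 1) \<Longrightarrow> q f A = q s B"
proof (induction n arbitrary: A B \<tau> f s)
  case 0
  have B: "B = {1..N}" using 0 by auto
  have "card A = N" using 0(4) B bij_betw_same_card by fastforce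
  hence A: "A = {1..N}" using 0(3) by (simp add: card_subset_eq)
  define \<tau>' where "\<tau>' x = (if x \<in> {1..N} then \<tau> x else x)" for x
  define s' where "s' i = (if i \<in> {1..N} then s i else 0)" for i
  have bt: "bij_betw \<tau>' {1..N} {1..N}"
    using 0(4) A B by (subst bij_betw_cong[where g=\<tau>]) (auto simp: \<tau>'_def)
  have pt: "\<tau>' permutes {1..N}"
    by (rule bij_imp_permutes[OF bt]) (auto simp: \<tau>'_def)
  have s01: "\<forall>i\<in>{1..N}. s' i \<in> {0,1}" using 0(6) B by (auto simp: s'_def le_Suc_eq)
  have "q f A = joint_prob M E N (s' \<circ> \<tau>')"
    unfolding joint_q A
  proof (intro arg_cong[where f="measure M"] evs_cong)
    fix i assume i: "i \<in> {1..N}"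
    then have "\<tau> i \<in> {1..N}" using 0(4) A B bij_betwE by blast
    then show "f i = (s' \<circ> \<tau>') i" using 0(5) A i by (simp add: s'_def \<tau>'_def)
  qed
  also have "\<dots> = joint_prob M E N s'"
    using sym s01 pt unfolding symmetric_events_def by metis
  also have "\<dots> = q s B" unfolding joint_q B
    by (intro arg_cong[where f="measure M"] evs_cong) (simp add: s'_def)
  finally show ?case .
next
  case (Suc n)
  obtain j where j: "j \<in> {1..N}" "j \<notin> B" using Suc(2) by (metis Diff_iff card.empty ex_in_conv nat.distinct(1))
  have "B \<subset> {1..N}" using Suc(3) j by auto
  hence "card B < N" by (metis card_atLeastAtMost diff_Suc_1 finite_atLeastAtMost psubset_card_mono)
  moreover have "card A = card B" using Suc(5) bij_betw_same_card by blast
  ultimately have "A \<noteq> {1..N}" by auto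
  then obtain j' where j': "j' \<in> {1..N}" "j' \<notin> A" using Suc(4) by blast
  define \<tau>2 where "\<tau>2 = \<tau>(j':=j)"
  have "bij_betw \<tau>2 A B" using Suc(5) j' by (subst bij_betw_cong[where g=\<tau>]) (auto simp: \<tau>2_def)
  hence bt2: "bij_betw \<tau>2 (insert j' A) (insert j B)"
    using notIn_Un_bij_betw[of j' A \<tau>2 B] j j' by (simp add: \<tau>2_def)
  have cd: "card ({1..N} - insert j B) = n" using Suc(2) j
    by (metis Diff_insert card_Diff_singleton diff_Suc_1 finite_Diff finite_atLeastAtMost insert_Diff_single insert_absorb DiffI)
  have eq: "q (f(j':=b)) (insert j' A) = q (s(j:=b)) (insert j B)" if b: "b \<le> 1" for b
  proof (rule Suc.IH[OF cd _ _ bt2])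
    show "insert j B \<subseteq> {1..N}" "insert j' A \<subseteq> {1..N}" using Suc j j' by auto
    show "\<forall>i\<in>insert j' A. (f(j' := b)) i = (s(j := b)) (\<tau>2 i)"
    proof
      fix i assume i: "i \<in> insert j' A"
      show "(f(j' := b)) i = (s(j := b)) (\<tau>2 i)"
      proof (cases "i = j'")
        case False
        then have "i \<in> A" using i by auto
        then have "\<tau> i \<in> B" using Suc(5) bij_betwE by blast
        then show ?thesis using False Suc(6) \<open>i \<in> A\<close> j by (auto simp: \<tau>2_def)
      qed (simp add: \<tau>2_def)
    qed
    show "\<forall>i\<in>insert j B. (s(j := b)) i \<le> 1" using Suc(7) b by auto
  qed
  have "q f A = q (f(j':=0)) (insert j' A) + q (f(j':=1)) (insert j' A)"
    using split[of A j' f] Suc(4) j' by auto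
  also have "\<dots> = q (s(j:=0)) (insert j B) + q (s(j:=1)) (insert j B)" using eq by simp
  also have "\<dots> = q s B" using split[of B j s] Suc(3) j by auto
  finally show ?case .
qed

lemma symq:
  "B \<subseteq> {1..N} \<Longrightarrow> A \<subseteq> {1..N} \<Longrightarrow> bij_betw \<tau> A B \<Longrightarrow>
   (\<And>i. i\<in>A \<Longrightarrow> f i = s (\<tau> i)) \<Longrightarrow> (\<And>i. i\<in>B \<Longrightarrow> s i \<le> 1) \<Longrightarrow> q f A = q s B"
  using symq_aux by blast

abbreviation "P \<equiv> prob_fun M E N"
abbreviation "G \<equiv> corr_fun M E N"

lemma G_rec:
  assumes "1 \<le> l"
  shows "G l r = P l r - (\<Sum>\<sigma>\<in>{\<sigma>. \<sigma> permutes {2..l}}. \<Sum>l'\<in>{1..l-1}.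
           1 / (fact (l' - 1) * fact (l - l')) *
           G l' (\<lambda>i. if i = 1 then r 1 else r (\<sigma> i)) *
           P (l - l') (\<lambda>i. r (\<sigma> (i + l'))))"
proof (cases "l = 1")
  case True
  then show ?thesis by (subst corr_fun.simps) simp
next
  case False
  then show ?thesis using assms by (subst corr_fun.simps) simp
qed

lemma P_cong: "(\<And>i. i \<in> {1..k} \<Longrightarrow> f i = g i) \<Longrightarrow> P k f = P k g"
proof -
  assume h: "\<And>i. i \<in> {1..k} \<Longrightarrow> f i = g i"
  have "evs M E (\<lambda>i. if i \<le> k then f i else t i) {1..N} = evs M E (\<lambda>i. if i \<le> k then g i else t i) {1..N}" for t
    by (rule evs_cong) (use h in auto)
  then show ?thesis unfolding prob_fun_def joint_q by simp
qed

lemma G_cong: "1 \<le> l \<Longrightarrow> (\<And>i. i \<in> {1..l} \<Longrightarrow> f i = g i) \<Longrightarrow> G l f = G l g"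
proof (induction l arbitrary: f g rule: less_induct)
  case (less l)
  have hP: "P l f = P l g" by (rule P_cong) (rule less(3))
  have hT: "1 / (fact (l' - 1) * fact (l - l')) * G l' (\<lambda>i. if i = 1 then f 1 else f (\<sigma> i)) * P (l - l') (\<lambda>i. f (\<sigma> (i + l')))
     = 1 / (fact (l' - 1) * fact (l - l')) * G l' (\<lambda>i. if i = 1 then g 1 else g (\<sigma> i)) * P (l - l') (\<lambda>i. g (\<sigma> (i + l')))"
    if \<sigma>: "\<sigma> \<in> {\<sigma>. \<sigma> permutes {2..l}}" and l': "l' \<in> {1..l-1}" for \<sigma> l'
  proof -
    have im: "\<sigma> i \<in> {2..l}" if "i \<in> {2..l}" for i using permutes_in_image[of \<sigma> "{2..l}" i] \<sigma> that by simp
    have "G l' (\<lambda>i. if i = 1 then f 1 else f (\<sigma> i)) = G l' (\<lambda>i. if i = 1 then g 1 else g (\<sigma> i))"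
    proof (rule less.IH)
      show "l' < l" "1 \<le> l'" using l' by auto
      fix i assume i: "i \<in> {1..l'}"
      show "(if i = 1 then f 1 else f (\<sigma> i)) = (if i = 1 then g 1 else g (\<sigma> i))"
      proof (cases "i = 1")
        case False
        then have "i \<in> {2..l}" using i l' by auto
        then have "\<sigma> i \<in> {2..l}" by (rule im)
        then have "\<sigma> i \<in> {1..l}" by auto
        then have "f (\<sigma> i) = g (\<sigma> i)" by (rule less(3))
        then show ?thesis using False by (simp only: if_False)
      qed (use less(3)[of 1] less(2) in simp)
    qed
    moreover have "P (l - l') (\<lambda>i. f (\<sigma> (i + l'))) = P (l - l') (\<lambda>i. g (\<sigma> (i + l')))"
    proof (rule P_cong)
      fix i assume "i \<in> {1..l-l'}"
      then have "i + l' \<in> {2..l}" using l' by auto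
      then have "\<sigma> (i+l') \<in> {2..l}" by (rule im)
      then have "\<sigma> (i+l') \<in> {1..l}" by auto
      then show "f (\<sigma> (i + l')) = g (\<sigma> (i + l'))" by (rule less(3))
    qed
    ultimately show ?thesis by (simp only:)
  qed
  show ?case
    unfolding G_rec[OF less(2), of f] G_rec[OF less(2), of g] hP
    by (rule arg_cong[where f="\<lambda>x. P l g - x"], rule sum.cong[OF refl], rule sum.cong[OF refl], rule hT)
qed

lemma sum_perm_left:
  assumes "\<pi> permutes S"
  shows "sum f {\<sigma>. \<sigma> permutes S} = sum (\<lambda>\<sigma>. f (\<pi> \<circ> \<sigma>)) {\<sigma>. \<sigma> permutes S}"
proof -
  have "bij_betw (\<lambda>\<sigma>. \<pi> \<circ> \<sigma>) {\<sigma>. \<sigma> permutes S} {\<sigma>. \<sigma> permutes S}"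
  proof (rule bij_betwI[where g="\<lambda>\<sigma>. inv \<pi> \<circ> \<sigma>"])
    show "(\<lambda>\<sigma>. \<pi> \<circ> \<sigma>) \<in> {\<sigma>. \<sigma> permutes S} \<rightarrow> {\<sigma>. \<sigma> permutes S}"
      using assms by (auto intro: permutes_compose)
    show "(\<lambda>\<sigma>. inv \<pi> \<circ> \<sigma>) \<in> {\<sigma>. \<sigma> permutes S} \<rightarrow> {\<sigma>. \<sigma> permutes S}"
      using assms by (auto intro: permutes_compose permutes_inv)
    show "inv \<pi> \<circ> (\<pi> \<circ> x) = x" for x using permutes_inv_o(2)[OF assms] by (simp add: o_assoc)
    show "\<pi> \<circ> (inv \<pi> \<circ> x) = x" for x using permutes_inv_o(1)[OF assms] by (simp add: o_assoc)
  qed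
  then show ?thesis by (rule sum.reindex_bij_betw[symmetric])
qed

lemma P_q: "k \<le> N \<Longrightarrow> P k f = q f {1..k}" by (rule marg)

lemma G_perm:
  assumes "\<pi> permutes {2..l}" "1 \<le> l" "l \<le> N" "\<And>i. i \<in> {1..l} \<Longrightarrow> s i \<le> 1"
  shows "G l (s \<circ> \<pi>) = G l s"
proof -
  have p1: "\<pi> permutes {1..l}" using assms(1) by (rule permutes_subset) auto
  have pi1: "\<pi> 1 = 1" using assms(1) by (simp add: permutes_not_in)
  have "P l (s \<circ> \<pi>) = P l s"
    unfolding P_q[OF assms(3)]
    by (rule symq[where \<tau>=\<pi>]) (use assms p1 permutes_imp_bij in auto)
  moreover have "(\<Sum>\<sigma>\<in>{\<sigma>. \<sigma> permutes {2..l}}. \<Sum>l'\<in>{1..l-1}.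
           1 / (fact (l' - 1) * fact (l - l')) *
           G l' (\<lambda>i. if i = 1 then s 1 else s (\<sigma> i)) *
           P (l - l') (\<lambda>i. s (\<sigma> (i + l')))) =
        (\<Sum>\<sigma>\<in>{\<sigma>. \<sigma> permutes {2..l}}. \<Sum>l'\<in>{1..l-1}.
           1 / (fact (l' - 1) * fact (l - l')) *
           G l' (\<lambda>i. if i = 1 then (s\<circ>\<pi>) 1 else (s\<circ>\<pi>) (\<sigma> i)) *
           P (l - l') (\<lambda>i. (s\<circ>\<pi>) (\<sigma> (i + l'))))"
    by (subst sum_perm_left[OF assms(1)]) (simp add: pi1[simplified] o_def cong: if_cong)
  ultimately show ?thesis
    unfolding G_rec[OF assms(2), of s] G_rec[OF assms(2), of "s\<circ>\<pi>"] by simp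
qed

definition "Tm l r \<sigma> l' = 1 / (fact (l' - 1) * fact (l - l')) *
           G l' (\<lambda>i. if i = 1 then r 1 else r (\<sigma> i)) * P (l - l') (\<lambda>i. r (\<sigma> (i + l')))"

lemma G_rec': "1 \<le> l \<Longrightarrow> G l r = P l r - (\<Sum>\<sigma>\<in>{\<sigma>. \<sigma> permutes {2..l}}. \<Sum>l'\<in>{1..l-1}. Tm l r \<sigma> l')"
  unfolding Tm_def by (rule G_rec)

lemma G1: "G 1 r = P 1 r"
  using G_rec'[of 1 r] by simp

lemma Pshift:
  assumes "\<sigma> permutes {2..m}" "m \<le> N" "1 \<le> l'" "l' \<le> m"
    and "\<And>i. i \<in> \<sigma> ` {l'+1..m} \<Longrightarrow> s i \<le> 1"
  shows "P (m - l') (\<lambda>i. s (\<sigma> (i + l'))) = q s (\<sigma> ` {l'+1..m})"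
proof -
  have b1: "bij_betw (\<lambda>i. i + l') {1..m-l'} {l'+1..m}"
    by (rule bij_betwI[where g="\<lambda>i. i - l'"]) (use assms in auto)
  have "inj_on \<sigma> {l'+1..m}" using permutes_inj[OF assms(1)] by (simp add: inj_on_def inj_def)
  then have b2: "bij_betw \<sigma> {l'+1..m} (\<sigma> ` {l'+1..m})" by (simp add: bij_betw_def)
  have b: "bij_betw (\<sigma> \<circ> (\<lambda>i. i + l')) {1..m-l'} (\<sigma> ` {l'+1..m})"
    by (rule bij_betw_trans[OF b1 b2])
  have sub: "\<sigma> ` {l'+1..m} \<subseteq> {2..m}"
  proof
    fix x assume "x \<in> \<sigma> ` {l'+1..m}"
    then obtain i where i: "i \<in> {l'+1..m}" "x = \<sigma> i" by blast
    then have "i \<in> {2..m}" using assms by auto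
    then show "x \<in> {2..m}" using permutes_in_image[OF assms(1)] i by simp
  qed
  show ?thesis
    unfolding P_q[OF order.trans[OF diff_le_self assms(2)]]
    by (rule symq[OF _ _ b]) (use sub assms in auto)
qed


lemma perm_fix1:
  fixes \<sigma> :: "nat \<Rightarrow> nat"
  assumes "\<sigma> permutes {2..l}" shows "\<sigma> 1 = 1" "\<sigma> i = 1 \<longleftrightarrow> i = 1"
proof -
  show s1: "\<sigma> 1 = 1" using assms by (simp add: permutes_not_in)
  show "\<sigma> i = 1 \<longleftrightarrow> i = 1"
    using s1 permutes_inj[OF assms] by (metis injD)
qed

lemma card_perm: "card {\<sigma>. \<sigma> permutes {2..l}} = fact (l - 1)"
  by (rule card_permutations) auto

lemma flip1:
  assumes IH: "\<And>l' s. 2 \<le> l' \<Longrightarrow> l' < l \<Longrightarrow> (\<And>i. i \<in> {1..l'} \<Longrightarrow> s i \<le> 1) \<Longrightarrow>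
                 G l' (s(1:=0)) + G l' (s(1:=1)) = 0"
    and l: "2 \<le> l" "l \<le> N" and s: "\<And>i. i \<in> {1..l} \<Longrightarrow> s i \<le> 1"
  shows "G l (s(1:=0)) + G l (s(1:=1)) = 0"
proof -
  define X where "X = 1 / fact (l - 1) * q s {2..l}"
  have key: "Tm l (s(1:=0)) \<sigma> l' + Tm l (s(1:=1)) \<sigma> l' = (if l' = 1 then X else 0)"
    if \<sigma>: "\<sigma> permutes {2..l}" and l': "l' \<in> {1..l-1}" for \<sigma> l'
  proof -
    define u where "u = (\<lambda>i. if i = 1 then s 1 else s (\<sigma> i))"
    define w where "w = (\<lambda>i. s (\<sigma> (i + l')))"
    have im: "\<sigma> i \<in> {2..l}" if "i \<in> {2..l}" for i using permutes_in_image[OF \<sigma>] that by simp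
    have ub: "(\<lambda>i. if i = 1 then (s(1:=b)) 1 else (s(1:=b)) (\<sigma> i)) = u(1:=b)" for b
    proof (rule ext)
      fix i
      have ne: "i \<noteq> 1 \<Longrightarrow> \<sigma> i \<noteq> 1" using perm_fix1(2)[OF \<sigma>, of i] by blast
      show "(if i = 1 then (s(1:=b)) 1 else (s(1:=b)) (\<sigma> i)) = (u(1:=b)) i"
        using ne by (simp add: u_def)
    qed
    have wb: "P (l - l') (\<lambda>i. (s(1:=b)) (\<sigma> (i + l'))) = P (l - l') w" for b
      unfolding w_def by (rule P_cong) (use l' perm_fix1[OF \<sigma>] in auto)
    have Tb: "Tm l (s(1:=b)) \<sigma> l' = 1 / (fact (l' - 1) * fact (l - l')) * G l' (u(1:=b)) * P (l - l') w" for b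
      unfolding Tm_def ub wb ..
    have u1: "u i \<le> 1" if "i \<in> {1..l'}" for i
    proof (cases "i = 1")
      case True then show ?thesis using s l by (simp add: u_def)
    next
      case False
      then have "i \<in> {2..l}" using that l' by auto
      then have "\<sigma> i \<in> {2..l}" by (rule im)
      then have "\<sigma> i \<in> {1..l}" by auto
      then show ?thesis using s[of "\<sigma> i"] False by (simp add: u_def)
    qed
    have Tsum: "Tm l (s(1:=0)) \<sigma> l' + Tm l (s(1:=1)) \<sigma> l' =
      1 / (fact (l' - 1) * fact (l - l')) * (G l' (u(1:=0)) + G l' (u(1:=1))) * P (l - l') w"
      unfolding Tb by (simp add: algebra_simps)
    show ?thesis
    proof (cases "l' = 1")
      case True
      have N1: "1 \<le> N" using l by simp
      have P1: "P 1 f = q f {1}" for f using P_q[OF N1, of f] by simp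
      have "G 1 (u(1:=0)) + G 1 (u(1:=1)) = 1"
        unfolding G1 P1 using split[of "{}" 1 u] q_empty[of u] N1 by simp
      moreover have "P (l - 1) w = q s {2..l}"
      proof -
        have "P (l - 1) w = q s (\<sigma> ` {1+1..l})"
          unfolding w_def True
        proof (rule Pshift[OF \<sigma> l(2)])
          show "1 \<le> (1::nat)" "1 \<le> l" using l by auto
          fix x assume "x \<in> \<sigma> ` {1+1..l}"
          then have "x \<in> {2..l}" using permutes_image[OF \<sigma>] by (metis one_add_one)
          then show "s x \<le> 1" using s[of x] by simp
        qed
        also have "\<sigma> ` {1+1..l} = {2..l}" using permutes_image[OF \<sigma>] by (metis one_add_one)
        finally show ?thesis .
      qed
      ultimately show ?thesis unfolding Tsum X_def using True by simp
    next
      case False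
      then have "G l' (u(1:=0)) + G l' (u(1:=1)) = 0" using IH[of l' u] u1 l' by auto
      then show ?thesis unfolding Tsum using False by simp
    qed
  qed
  have P01: "P l (s(1:=0)) + P l (s(1:=1)) = q s {2..l}"
  proof -
    have "insert 1 {2..l} = {1..l}" using l by auto
    then show ?thesis unfolding P_q[OF l(2)] using split[of "{2..l}" 1 s] l by auto
  qed
  have "G l (s(1:=0)) + G l (s(1:=1)) = (P l (s(1:=0)) + P l (s(1:=1))) -
     (\<Sum>\<sigma>\<in>{\<sigma>. \<sigma> permutes {2..l}}. \<Sum>l'\<in>{1..l-1}. Tm l (s(1:=0)) \<sigma> l' + Tm l (s(1:=1)) \<sigma> l')"
  proof -
    have l1: "1 \<le> l" using l by simp
    show ?thesis unfolding G_rec'[OF l1] by (simp add: sum.distrib)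
  qed
  also have "\<dots> = q s {2..l} - (\<Sum>\<sigma>\<in>{\<sigma>. \<sigma> permutes {2..l}}. \<Sum>l'\<in>{1..l-1}. (if l' = 1 then X else 0))"
    unfolding P01 by (rule arg_cong[where f="\<lambda>x. q s {2..l} - x"], rule sum.cong[OF refl], rule sum.cong[OF refl], rule key) auto
  also have "\<dots> = q s {2..l} - fact (l - 1) * X"
    using l by (simp add: card_perm)
  also have "\<dots> = 0" unfolding X_def by simp
  finally show ?thesis .
qed


lemma R1:
  fixes h :: "(nat \<Rightarrow> nat) \<Rightarrow> real"
  assumes "2 \<le> l"
  shows "(\<Sum>\<sigma>\<in>{\<sigma>. \<sigma> permutes {2..l}}. h \<sigma>) =
         (\<Sum>b\<in>{2..l}. \<Sum>\<rho>\<in>{\<rho>. \<rho> permutes {2..l-1}}. h (\<rho> \<circ> Transposition.transpose l b))"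
proof -
  have ins: "{2..l} = insert l {2..l-1}" using assms by auto
  have "(\<Sum>\<sigma>\<in>{\<sigma>. \<sigma> permutes {2..l}}. h \<sigma>) = (\<Sum>\<sigma>\<in>{\<sigma>. \<sigma> permutes {2..l}}. h (inv \<sigma>))"
    by (rule sum_permutations_inverse)
  also have "\<dots> = (\<Sum>b\<in>{2..l}. \<Sum>\<rho>\<in>{\<rho>. \<rho> permutes {2..l-1}}. h (inv (Transposition.transpose l b \<circ> \<rho>)))"
    unfolding ins by (rule sum_over_permutations_insert) auto
  also have "\<dots> = (\<Sum>b\<in>{2..l}. \<Sum>\<rho>\<in>{\<rho>. \<rho> permutes {2..l-1}}. h (inv \<rho> \<circ> Transposition.transpose l b))"
  proof (rule sum.cong[OF refl], rule sum.cong[OF refl])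
    fix b \<rho> assume "\<rho> \<in> {\<rho>. \<rho> permutes {2..l-1}}"
    then have "bij \<rho>" by (simp add: permutes_bij)
    then show "h (inv (Transposition.transpose l b \<circ> \<rho>)) = h (inv \<rho> \<circ> Transposition.transpose l b)"
      by (simp add: o_inv_distrib)
  qed
  also have "\<dots> = (\<Sum>b\<in>{2..l}. \<Sum>\<rho>\<in>{\<rho>. \<rho> permutes {2..l-1}}. h (\<rho> \<circ> Transposition.transpose l b))"
  proof (rule sum.cong[OF refl])
    fix b
    show "(\<Sum>\<rho>\<in>{\<rho>. \<rho> permutes {2..l-1}}. h (inv \<rho> \<circ> Transposition.transpose l b)) =
          (\<Sum>\<rho>\<in>{\<rho>. \<rho> permutes {2..l-1}}. h (\<rho> \<circ> Transposition.transpose l b))"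
      using sum_permutations_inverse[of "\<lambda>\<rho>. h (\<rho> \<circ> Transposition.transpose l b)" "{2..l-1}"] by simp
  qed
  finally show ?thesis .
qed

lemma cfact:
  assumes "1 \<le> l'" "l' \<le> l - 1"
  shows "real (l - l') * (1 / (fact (l' - 1) * fact (l - l'))) = 1 / (fact (l' - 1) * fact (l - 1 - l'))"
proof -
  have e: "l - l' = Suc (l - 1 - l')" using assms by auto
  have "fact (l - l') = real (l - l') * fact (l - 1 - l')"
    unfolding e fact_Suc by simp
  then show ?thesis using e by (simp add: field_simps)
qed


lemma flipl:
  assumes IH: "\<And>l' j s. 2 \<le> l' \<Longrightarrow> l' < l \<Longrightarrow> j \<in> {1..l'} \<Longrightarrow> (\<And>i. i \<in> {1..l'} \<Longrightarrow> s i \<le> 1) \<Longrightarrow>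
                 G l' (s(j:=0)) + G l' (s(j:=1)) = 0"
    and l: "2 \<le> l" "l \<le> N" and s: "\<And>i. i \<in> {1..l} \<Longrightarrow> s i \<le> 1"
  shows "G l (s(l:=0)) + G l (s(l:=1)) = 0"
proof -
  define u where "u \<sigma> = (\<lambda>i. if i = 1 then s 1 else s (\<sigma> i))" for \<sigma> :: "nat \<Rightarrow> nat"
  define c where "c l' = (1 / (fact (l' - 1) * fact (l - l')) :: real)" for l'
  define h where "h \<sigma> = (\<Sum>l'\<in>{1..l-1}. if l' < inv \<sigma> l then c l' * G l' (u \<sigma>) * q s (\<sigma> ` {l'+1..l} - {l}) else 0)" for \<sigma>
  have l1: "1 \<le> l" using l by simp
  have key: "Tm l (s(l:=0)) \<sigma> l' + Tm l (s(l:=1)) \<sigma> l' =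
      (if l' < inv \<sigma> l then c l' * G l' (u \<sigma>) * q s (\<sigma> ` {l'+1..l} - {l}) else 0)"
    if \<sigma>: "\<sigma> permutes {2..l}" and l': "l' \<in> {1..l-1}" for \<sigma> l'
  proof -
    define j where "j = inv \<sigma> l"
    have im: "\<sigma> i \<in> {2..l}" if "i \<in> {2..l}" for i using permutes_in_image[OF \<sigma>] that by simp
    have j2: "j \<in> {2..l}" unfolding j_def using permutes_in_image[OF permutes_inv[OF \<sigma>], of l] l by simp
    have sj: "\<sigma> i = l \<longleftrightarrow> i = j" for i unfolding j_def using permutes_inv_eq[OF \<sigma>, of l i] by auto
    define w where "w b = (\<lambda>i. (s(l:=b)) (\<sigma> (i + l')))" for b
    have ub: "(\<lambda>i. if i = 1 then (s(l:=b)) 1 else (s(l:=b)) (\<sigma> i)) = (u \<sigma>)(j:=b)" for b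
    proof (rule ext)
      fix i
      show "(if i = 1 then (s(l:=b)) 1 else (s(l:=b)) (\<sigma> i)) = ((u \<sigma>)(j:=b)) i"
        using sj[of i] j2 l by (auto simp: u_def)
    qed
    have Tsum: "Tm l (s(l:=0)) \<sigma> l' + Tm l (s(l:=1)) \<sigma> l' =
      c l' * (G l' ((u \<sigma>)(j:=0)) * P (l - l') (w 0) + G l' ((u \<sigma>)(j:=1)) * P (l - l') (w 1))"
      unfolding Tm_def ub w_def c_def by (simp add: algebra_simps)
    have u1: "u \<sigma> i \<le> 1" if "i \<in> {1..l'}" for i
    proof (cases "i = 1")
      case True then show ?thesis using s l by (simp add: u_def)
    next
      case False
      then have "i \<in> {2..l}" using that l' by auto
      then have "\<sigma> i \<in> {2..l}" by (rule im)
      then have "\<sigma> i \<in> {1..l}" by auto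
      then show ?thesis using s[of "\<sigma> i"] False by (simp add: u_def)
    qed
    show ?thesis
    proof (cases "j \<le> l'")
      case True
      have wb: "P (l - l') (w b) = P (l - l') (w 0)" for b
      proof (rule P_cong)
        fix i assume "i \<in> {1..l-l'}"
        then have "\<sigma> (i + l') \<noteq> l" using sj[of "i+l'"] True by auto
        then show "w b i = w 0 i" by (simp add: w_def)
      qed
      have "G l' ((u \<sigma>)(j:=0)) + G l' ((u \<sigma>)(j:=1)) = 0"
        by (rule IH) (use True j2 l' u1 in auto)
      then have "G l' ((u \<sigma>)(j:=0)) * P (l - l') (w 0) + G l' ((u \<sigma>)(j:=1)) * P (l - l') (w 0) = 0"
        by (simp add: distrib_right[symmetric])
      then show ?thesis unfolding Tsum using wb[of 1] True by (simp add: j_def)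
    next
      case False
      have l1': "1 \<le> l'" using l' by simp
      have Gb: "G l' ((u \<sigma>)(j:=b)) = G l' (u \<sigma>)" for b
        by (rule G_cong[OF l1']) (use False in auto)
      define B where "B = \<sigma> ` {l'+1..l}"
      have Bsub: "B \<subseteq> {2..l}"
      proof
        fix x assume "x \<in> B"
        then obtain i where i: "i \<in> {l'+1..l}" "x = \<sigma> i" unfolding B_def by blast
        then have "i \<in> {2..l}" using l' by auto
        then show "x \<in> {2..l}" using im i by simp
      qed
      have lB: "l \<in> B" unfolding B_def using sj[of j] False j2 by force
      have Pw: "P (l - l') (w b) = q (s(l:=b)) B" if "b \<le> 1" for b
        unfolding w_def B_def
      proof (rule Pshift[OF \<sigma> l(2)])
        show "1 \<le> l'" "l' \<le> l" using l' by auto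
        fix x assume "x \<in> \<sigma> ` {l'+1..l}"
        then have "x \<in> {1..l}" using Bsub unfolding B_def by auto
        then show "(s(l:=b)) x \<le> 1" using s[of x] that by auto
      qed
      have ins: "insert l (B - {l}) = B" using lB by auto
      have qs: "q (s(l:=0)) B + q (s(l:=1)) B = q s (B - {l})"
      proof -
        have "B - {l} \<subseteq> {1..N}" using Bsub l by auto
        then show ?thesis using split[of "B - {l}" l s] l unfolding ins by auto
      qed
      have Pw0: "P (l - l') (w 0) = q (s(l:=0)) B" by (rule Pw) simp
      have Pw1: "P (l - l') (w 1) = q (s(l:=1)) B" by (rule Pw) simp
      have "c l' * (G l' (u \<sigma>) * q (s(l:=0)) B + G l' (u \<sigma>) * q (s(l:=1)) B) =
            c l' * G l' (u \<sigma>) * q s (B - {l})"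
        unfolding qs[symmetric] by (simp add: algebra_simps)
      then show ?thesis unfolding Tsum Gb Pw0 Pw1
        using False by (simp add: j_def B_def)
    qed
  qed
  have P01: "P l (s(l:=0)) + P l (s(l:=1)) = P (l - 1) s"
  proof -
    have "insert l {1..l-1} = {1..l}" using l by auto
    then show ?thesis unfolding P_q[OF l(2)] P_q[OF order.trans[OF diff_le_self l(2)]]
      using split[of "{1..l-1}" l s] l by auto
  qed
  have main: "(\<Sum>\<sigma>\<in>{\<sigma>. \<sigma> permutes {2..l}}. h \<sigma>) = P (l - 1) s"
  proof -
    define Y where "Y \<rho> l' = c l' * G l' (u \<rho>) * q s (\<rho> ` {l'+1..l-1})" for \<rho> l'
    define d where "d l' = (1 / (fact (l' - 1) * fact (l - 1 - l')) :: real)" for l'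
    have R2: "h (\<rho> \<circ> Transposition.transpose l b) = (\<Sum>l'\<in>{1..l-1}. if l' < b then Y \<rho> l' else 0)"
      if \<rho>: "\<rho> permutes {2..l-1}" and b: "b \<in> {2..l}" for \<rho> b
    proof -
      define \<sigma> where "\<sigma> = \<rho> \<circ> Transposition.transpose l b"
      have \<rho>2: "\<rho> permutes {2..l}" using \<rho> by (rule permutes_subset) auto
      have tp: "Transposition.transpose l b permutes {2..l}" using b l by (intro permutes_swap_id) auto
      have \<sigma>p: "\<sigma> permutes {2..l}" unfolding \<sigma>_def by (rule permutes_compose[OF tp \<rho>2])
      have \<rho>l: "\<rho> l = l" by (rule permutes_not_in[OF \<rho>]) (use l in simp)
      have invb: "inv \<sigma> l = b" using permutes_inv_eq[OF \<sigma>p, of l b] \<rho>l by (simp add: \<sigma>_def)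
      have \<rho>im: "\<rho> i \<in> {2..l-1}" if "i \<in> {2..l-1}" for i using permutes_in_image[OF \<rho>] that by simp
      show ?thesis unfolding h_def invb \<sigma>_def[symmetric]
      proof (rule sum.cong[OF refl])
        fix l' assume l': "l' \<in> {1..l-1}"
        show "(if l' < b then c l' * G l' (u \<sigma>) * q s (\<sigma> ` {l' + 1..l} - {l}) else 0) =
              (if l' < b then Y \<rho> l' else 0)"
        proof (cases "l' < b")
          case True
          have l1': "1 \<le> l'" using l' by simp
          have G: "G l' (u \<sigma>) = G l' (u \<rho>)"
          proof (rule G_cong[OF l1'])
            fix i assume "i \<in> {1..l'}"
            then have "i \<noteq> l" "i \<noteq> b" using True l' by auto
            then show "u \<sigma> i = u \<rho> i" by (simp add: u_def \<sigma>_def)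
          qed
          have "Transposition.transpose l b ` {l'+1..l} = {l'+1..l}"
            using True b l' by (intro transpose_image_eq) auto
          then have e2: "\<sigma> ` {l'+1..l} = \<rho> ` {l'+1..l}" unfolding \<sigma>_def image_comp[symmetric] by simp
          have e0: "{l'+1..l} = insert l {l'+1..l-1}" using l' by auto
          have e1: "\<sigma> ` {l'+1..l} = insert l (\<rho> ` {l'+1..l-1})" using e2 e0 \<rho>l by (metis image_insert)
          have "l \<notin> \<rho> ` {l'+1..l-1}"
          proof
            assume "l \<in> \<rho> ` {l'+1..l-1}"
            then obtain i where i: "i \<in> {l'+1..l-1}" "\<rho> i = l" by blast
            then have "i \<in> {2..l-1}" using l' by auto
            then have "\<rho> i \<in> {2..l-1}" by (rule \<rho>im)
            then show False using i l by auto
          qed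
          then have "\<sigma> ` {l'+1..l} - {l} = \<rho> ` {l'+1..l-1}" unfolding e1 by auto
          then show ?thesis using True G by (simp add: Y_def)
        qed simp
      qed
    qed
    have cnt: "(\<Sum>b\<in>{2..l}. if l' < b then Y \<rho> l' else 0) = real (l - l') * Y \<rho> l'"
      if l': "l' \<in> {1..l-1}" for \<rho> l'
    proof -
      have "(\<Sum>b\<in>{2..l}. if l' < b then Y \<rho> l' else 0) = (\<Sum>b\<in>{b\<in>{2..l}. l' < b}. Y \<rho> l')"
        by (rule sum.inter_filter[symmetric]) simp
      also have "{b\<in>{2..l}. l' < b} = {l'+1..l}" using l' by auto
      finally show ?thesis by simp
    qed
    have "(\<Sum>\<sigma>\<in>{\<sigma>. \<sigma> permutes {2..l}}. h \<sigma>) =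
          (\<Sum>b\<in>{2..l}. \<Sum>\<rho>\<in>{\<rho>. \<rho> permutes {2..l-1}}. h (\<rho> \<circ> Transposition.transpose l b))"
      by (rule R1[OF l(1)])
    also have "\<dots> = (\<Sum>b\<in>{2..l}. \<Sum>\<rho>\<in>{\<rho>. \<rho> permutes {2..l-1}}. \<Sum>l'\<in>{1..l-1}. if l' < b then Y \<rho> l' else 0)"
      by (rule sum.cong[OF refl], rule sum.cong[OF refl], rule R2) auto
    also have "\<dots> = (\<Sum>\<rho>\<in>{\<rho>. \<rho> permutes {2..l-1}}. \<Sum>l'\<in>{1..l-1}. \<Sum>b\<in>{2..l}. if l' < b then Y \<rho> l' else 0)"
      by (subst sum.swap) (rule sum.cong[OF refl], rule sum.swap)
    also have "\<dots> = (\<Sum>\<rho>\<in>{\<rho>. \<rho> permutes {2..l-1}}. \<Sum>l'\<in>{1..l-1}. d l' * G l' (u \<rho>) * q s (\<rho> ` {l'+1..l-1}))"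
    proof (rule sum.cong[OF refl], rule sum.cong[OF refl])
      fix \<rho> l' assume l': "l' \<in> {1..l-1}"
      have "real (l - l') * c l' = d l'" unfolding c_def d_def by (rule cfact) (use l' in auto)
      then show "(\<Sum>b\<in>{2..l}. if l' < b then Y \<rho> l' else 0) = d l' * G l' (u \<rho>) * q s (\<rho> ` {l'+1..l-1})"
        using cnt[OF l', of \<rho>] unfolding Y_def by (simp add: algebra_simps)
    qed
    also have "\<dots> = P (l - 1) s"
    proof -
      define m where "m = l - 1"
      have m1: "1 \<le> m" and mN: "m \<le> N" using l by (auto simp: m_def)
      have sm: "\<And>i. i \<in> {1..m} \<Longrightarrow> s i \<le> 1" using s by (auto simp: m_def)
      have ms: "m = Suc (m - 1)" using m1 by simp
      have split_sum: "(\<Sum>l'\<in>{1..m}. F l') = (\<Sum>l'\<in>{1..m-1}. F l') + F m" for F :: "nat \<Rightarrow> real"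
        by (subst ms, subst sum.cl_ivl_Suc) (use ms in simp)
      have inner: "(\<Sum>l'\<in>{1..m}. d l' * G l' (u \<rho>) * q s (\<rho> ` {l'+1..m})) =
            (\<Sum>l'\<in>{1..m-1}. Tm m s \<rho> l') + G m s / fact (m - 1)"
        if \<rho>: "\<rho> permutes {2..m}" for \<rho>
      proof -
        have \<rho>1: "\<rho> 1 = 1" using perm_fix1(1)[OF \<rho>] .
        have us: "u \<rho> = s \<circ> \<rho>" by (rule ext) (use \<rho>1 in \<open>simp add: u_def\<close>)
        have Gm: "G m (u \<rho>) = G m s" unfolding us by (rule G_perm[OF \<rho> m1 mN sm])
        have T: "d l' * G l' (u \<rho>) * q s (\<rho> ` {l'+1..m}) = Tm m s \<rho> l'" if l': "l' \<in> {1..m-1}" for l'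
        proof -
          have "P (m - l') (\<lambda>i. s (\<rho> (i + l'))) = q s (\<rho> ` {l'+1..m})"
          proof (rule Pshift[OF \<rho> mN])
            show "1 \<le> l'" "l' \<le> m" using l' by auto
            fix x assume "x \<in> \<rho> ` {l'+1..m}"
            then obtain i where i: "i \<in> {l'+1..m}" "x = \<rho> i" by blast
            then have "i \<in> {2..m}" using l' by auto
            then have "x \<in> {2..m}" using permutes_in_image[OF \<rho>] i by simp
            then show "s x \<le> 1" using sm[of x] by simp
          qed
          then show ?thesis unfolding Tm_def d_def u_def m_def by simp
        qed
        have "(\<Sum>l'\<in>{1..m}. d l' * G l' (u \<rho>) * q s (\<rho> ` {l'+1..m})) =
              (\<Sum>l'\<in>{1..m-1}. d l' * G l' (u \<rho>) * q s (\<rho> ` {l'+1..m})) + d m * G m (u \<rho>) * q s (\<rho> ` {m+1..m})"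
          by (rule split_sum)
        also have "(\<Sum>l'\<in>{1..m-1}. d l' * G l' (u \<rho>) * q s (\<rho> ` {l'+1..m})) = (\<Sum>l'\<in>{1..m-1}. Tm m s \<rho> l')"
          by (rule sum.cong[OF refl], rule T)
        also have "d m * G m (u \<rho>) * q s (\<rho> ` {m+1..m}) = G m s / fact (m - 1)"
          unfolding Gm d_def by (simp add: q_empty m_def)
        finally show ?thesis .
      qed
      have "(\<Sum>\<rho>\<in>{\<rho>. \<rho> permutes {2..l-1}}. \<Sum>l'\<in>{1..l-1}. d l' * G l' (u \<rho>) * q s (\<rho> ` {l'+1..l-1})) =
            (\<Sum>\<rho>\<in>{\<rho>. \<rho> permutes {2..m}}. (\<Sum>l'\<in>{1..m-1}. Tm m s \<rho> l') + G m s / fact (m - 1))"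
        unfolding m_def[symmetric] by (rule sum.cong[OF refl], rule inner) simp
      also have "\<dots> = (\<Sum>\<rho>\<in>{\<rho>. \<rho> permutes {2..m}}. \<Sum>l'\<in>{1..m-1}. Tm m s \<rho> l') + G m s"
        by (simp add: sum.distrib card_perm)
      also have "\<dots> = P m s"
        using G_rec'[OF m1, of s] by simp
      finally show ?thesis by (simp add: m_def)
    qed
    finally show ?thesis .
  qed
  have "G l (s(l:=0)) + G l (s(l:=1)) = (P l (s(l:=0)) + P l (s(l:=1))) -
     (\<Sum>\<sigma>\<in>{\<sigma>. \<sigma> permutes {2..l}}. \<Sum>l'\<in>{1..l-1}. Tm l (s(l:=0)) \<sigma> l' + Tm l (s(l:=1)) \<sigma> l')"
    unfolding G_rec'[OF l1] by (simp add: sum.distrib)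
  also have "\<dots> = P (l - 1) s - (\<Sum>\<sigma>\<in>{\<sigma>. \<sigma> permutes {2..l}}. h \<sigma>)"
    unfolding P01 h_def
    by (rule arg_cong[where f="\<lambda>x. P (l - 1) s - x"], rule sum.cong[OF refl], rule sum.cong[OF refl], rule key) auto
  also have "\<dots> = 0" using main by simp
  finally show ?thesis .
qed


lemma flip_all:
  "2 \<le> l \<Longrightarrow> l \<le> N \<Longrightarrow> j \<in> {1..l} \<Longrightarrow> (\<And>i. i \<in> {1..l} \<Longrightarrow> s i \<le> 1) \<Longrightarrow>
   G l (s(j:=0)) + G l (s(j:=1)) = 0"
proof (induction l arbitrary: j s rule: less_induct)
  case (less l)
  have IH: "G l' (t(j':=0)) + G l' (t(j':=1)) = 0"
    if "2 \<le> l'" "l' < l" "j' \<in> {1..l'}" "\<And>i. i \<in> {1..l'} \<Longrightarrow> t i \<le> 1" for l' j' t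
    by (rule less.IH) (use that less.prems(2) in auto)
  consider "j = 1" | "j = l" | "2 \<le> j" "j < l" using less.prems(3) by fastforce
  then show ?case
  proof cases
    case 1
    have "G l (s(1:=0)) + G l (s(1:=1)) = 0"
    proof (rule flip1)
      fix l' t assume "2 \<le> l'" "l' < l" "\<And>i. i \<in> {1..l'} \<Longrightarrow> t i \<le> (1::nat)"
      then show "G l' (t(1:=0)) + G l' (t(1:=1)) = 0" by (intro IH) auto
    qed (use less.prems in auto)
    then show ?thesis unfolding 1 .
  next
    case 2
    have "G l (s(l:=0)) + G l (s(l:=1)) = 0"
    proof (rule flipl)
      fix l' j' t assume "2 \<le> l'" "l' < l" "j' \<in> {1..l'}" "\<And>i. i \<in> {1..l'} \<Longrightarrow> t i \<le> (1::nat)"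
      then show "G l' (t(j':=0)) + G l' (t(j':=1)) = 0" by (intro IH) auto
    qed (use less.prems in auto)
    then show ?thesis unfolding 2 .
  next
    case 3
    define t where "t = s \<circ> Transposition.transpose j l"
    have tp: "Transposition.transpose j l permutes {2..l}" using 3 by (intro permutes_swap_id) auto
    have l1: "1 \<le> l" using less.prems by simp
    have eq: "G l (s(j:=b)) = G l (t(l:=b))" if b: "b \<le> 1" for b
    proof -
      have "G l ((s(j:=b)) \<circ> Transposition.transpose j l) = G l (s(j:=b))"
        by (rule G_perm[OF tp l1 less.prems(2)]) (use less.prems(4) b in auto)
      moreover have "(s(j:=b)) \<circ> Transposition.transpose j l = t(l:=b)"
      proof (rule ext)
        fix i show "((s(j:=b)) \<circ> Transposition.transpose j l) i = (t(l:=b)) i"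
          using 3 by (cases "i = j"; cases "i = l") (auto simp: t_def)
      qed
      ultimately show ?thesis by simp
    qed
    have tle: "t i \<le> 1" if "i \<in> {1..l}" for i
    proof -
      have "Transposition.transpose j l i \<in> {1..l}" using that 3 by (cases "i = j"; cases "i = l") auto
      then show ?thesis using less.prems(4) by (simp add: t_def)
    qed
    have "G l (t(l:=0)) + G l (t(l:=1)) = 0"
    proof (rule flipl)
      fix l' j' t assume "2 \<le> l'" "l' < l" "j' \<in> {1..l'}" "\<And>i. i \<in> {1..l'} \<Longrightarrow> t i \<le> (1::nat)"
      then show "G l' (t(j':=0)) + G l' (t(j':=1)) = 0" by (intro IH) auto
    qed (use less.prems tle in auto)
    moreover have "G l (s(j:=0)) = G l (t(l:=0))" by (rule eq) simp
    moreover have "G l (s(j:=1)) = G l (t(l:=1))" by (rule eq) simp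
    ultimately show ?thesis by linarith
  qed
qed

lemma sign:
  assumes k: "2 \<le> k" "k \<le> N" and r: "\<And>i. i \<in> {1..k} \<Longrightarrow> r i \<in> {0,1}"
  shows "G k r = (\<Prod>l=1..k. (-1::real) ^ (r l + 1)) * G k (\<lambda>_. 1)"
proof -
  define t where "t m = (\<lambda>i. if i \<in> {1..m} then 1 else r i)" for m
  have "m \<le> k \<Longrightarrow> G k r = (\<Prod>l=1..m. (-1::real) ^ (r l + 1)) * G k (t m)" for m
  proof (induction m)
    case 0
    have "t 0 = r" by (simp add: t_def)
    then show ?case by simp
  next
    case (Suc m)
    have tle: "\<And>i. i \<in> {1..k} \<Longrightarrow> t m i \<le> 1" using r by (force simp: t_def)
    have tS: "t (Suc m) = (t m)(Suc m := 1)" by (auto simp: t_def fun_eq_iff)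
    have tm: "t m = (t m)(Suc m := r (Suc m))" by (auto simp: t_def fun_eq_iff)
    have j: "Suc m \<in> {1..k}" using Suc by simp
    have "G k (t m) = (-1::real) ^ (r (Suc m) + 1) * G k (t (Suc m))"
    proof (cases "r (Suc m) = 0")
      case True
      have "G k ((t m)(Suc m := 0)) + G k ((t m)(Suc m := 1)) = 0"
        by (rule flip_all[OF k j tle])
      moreover have "G k (t m) = G k ((t m)(Suc m := 0))" using tm True by metis
      moreover have "G k (t (Suc m)) = G k ((t m)(Suc m := 1))" using tS by simp
      ultimately have "G k (t m) = - G k (t (Suc m))" by linarith
      then show ?thesis using True by simp
    next
      case False
      then have "r (Suc m) = 1" using r[OF j] by auto
      then show ?thesis using tm tS by simp
    qed
    then show ?case using Suc by (simp add: mult.assoc)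
  qed
  from this[of k] have "G k r = (\<Prod>l=1..k. (-1::real) ^ (r l + 1)) * G k (t k)" by simp
  moreover have "G k (t k) = G k (\<lambda>_. 1)" by (rule G_cong) (use k in \<open>auto simp: t_def\<close>)
  ultimately show ?thesis by simp
qed

end

theorem mainTheorem5:
  fixes M :: "'a measure" and E :: "nat \<Rightarrow> 'a set" and N k :: nat and r :: "nat \<Rightarrow> nat"
  assumes "prob_space M"
    and "\<And>i. i \<in> {1..N} \<Longrightarrow> E i \<in> sets M"
    and "symmetric_events M E N"
    and "2 \<le> k" and "k \<le> N"
    and "\<And>i. i \<in> {1..k} \<Longrightarrow> r i \<in> {0,1}"
  shows "corr_fun M E N k r =
           inverse (real N ^ k) * corr_coeff M E N k * (\<Prod>l=1..k. (-1::real) ^ (r l + 1))"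
proof -
  interpret symev M E N
    using assms(1,2,3) by (simp add: symev_def symev_axioms_def)
  have N0: "real N ^ k \<noteq> 0" using assms(4,5) by simp
  have c: "inverse (real N ^ k) * corr_coeff M E N k = G k (\<lambda>_. 1)"
    unfolding corr_coeff_def using N0 by simp
  have sg: "G k r = (\<Prod>l=1..k. (-1::real) ^ (r l + 1)) * G k (\<lambda>_. 1)"
    by (rule sign) (use assms in auto)
  show ?thesis unfolding c sg by (rule mult.commute)
qed

end
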